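(* Let $A\in B_\infty(L)$ with $A^T=A$, let $\{e_j\}_{j\in\mathbb N}$ be a complete orthonormal system in $L$, and $\Delta_M(A):=\sum_{j=1}^M a(Ae_j)a(\bar e_j)$. If the operators $\Delta_M(A)$ converge strongly on all of $\mathcal F^{(2)}$ as $M\to\infty$, then $A\in B_2(L)$.
   Context: $L$ is a separable complex Hilbert space with $\dim L=\infty$, scalar product antilinear in the first argument, and a conjugation $J:f\mapsto\bar f$ (antilinear involution with $(\bar f,\bar g)=(g,f)$); for bounded $A$, $\bar A:=JAJ$ and $A^T:=(\bar A)^*$. $B_\infty(L)$ and $B_2(L)$ denote the bounded and the Hilbert–Schmidt operators on $L$. $\mathcal F$ carries a Fock representation of the CCR over $L$: on a dense invariant domain $D$ there are operators $a(f),a^\dagger(f)$, linear in $f$, with $[a(f),a(g)]=0=[a^\dagger(f),a^\dagger(g)]$, $[a(f),a^\dagger(g)]=(\bar f,g)\mathrm{id}$, $(a(f)\Phi,\Psi)=(\Phi,a^\dagger(\bar f)\Psi)$, a unit vacuum $\Omega$ with $a(f)\Omega=0$, and $\mathcal F$ is the closure of the span of all vectors $a^\dagger(f_n)\cdots a^\dagger(f_1)\Omega$. $\mathcal F^{(2)}$ is the closure of $\operatorname{span}\{a^\dagger(f_2)a^\dagger(f_1)\Omega\}$; $a(f),a^\dagger(f)$ extend to bounded operators between the closed $n$-particle spaces, which are used. *)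

theory Defs
  imports Complex_Main
begin

text \<open>Abstract complex (pre-)Hilbert spaces: a carrier type with addition, a complex
  scalar multiplication sc and an inner product ip, antilinear in the first argument.\<close>

definition cvs :: "(complex \<Rightarrow> 'v::ab_group_add \<Rightarrow> 'v) \<Rightarrow> bool" where
  "cvs sc \<longleftrightarrow> (\<forall>a x y. sc a (x + y) = sc a x + sc a y) \<and> (\<forall>a b x. sc (a + b) x = sc a x + sc b x)
     \<and> (\<forall>a b x. sc a (sc b x) = sc (a * b) x) \<and> (\<forall>x. sc 1 x = x)"

definition cinner_space :: "(complex \<Rightarrow> 'v::ab_group_add \<Rightarrow> 'v) \<Rightarrow> ('v \<Rightarrow> 'v \<Rightarrow> complex) \<Rightarrow> bool" where
  "cinner_space sc ip \<longleftrightarrow> cvs sc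
     \<and> (\<forall>x y z. ip x (y + z) = ip x y + ip x z)
     \<and> (\<forall>a x y. ip x (sc a y) = a * ip x y)
     \<and> (\<forall>x y. ip y x = cnj (ip x y))
     \<and> (\<forall>x. Re (ip x x) \<ge> 0)
     \<and> (\<forall>x. ip x x = 0 \<longrightarrow> x = 0)"

definition cnorm :: "('v \<Rightarrow> 'v \<Rightarrow> complex) \<Rightarrow> 'v \<Rightarrow> real" where
  "cnorm ip x = sqrt (Re (ip x x))"

definition chilbert :: "(complex \<Rightarrow> 'v::ab_group_add \<Rightarrow> 'v) \<Rightarrow> ('v \<Rightarrow> 'v \<Rightarrow> complex) \<Rightarrow> bool" where
  "chilbert sc ip \<longleftrightarrow> cinner_space sc ip
     \<and> (\<forall>X. (\<forall>\<epsilon>>0. \<exists>N. \<forall>m\<ge>N. \<forall>n\<ge>N. cnorm ip (X m - X n) < \<epsilon>)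
           \<longrightarrow> (\<exists>x. (\<lambda>n. cnorm ip (X n - x)) \<longlonglongrightarrow> 0))"

definition conjugation :: "(complex \<Rightarrow> 'v::ab_group_add \<Rightarrow> 'v) \<Rightarrow> ('v \<Rightarrow> 'v \<Rightarrow> complex) \<Rightarrow> ('v \<Rightarrow> 'v) \<Rightarrow> bool" where
  "conjugation sc ip J \<longleftrightarrow> (\<forall>x y. J (x + y) = J x + J y) \<and> (\<forall>a x. J (sc a x) = sc (cnj a) (J x))
     \<and> (\<forall>x. J (J x) = x) \<and> (\<forall>f g. ip (J f) (J g) = ip g f)"

definition linear_on :: "(complex \<Rightarrow> 'v::ab_group_add \<Rightarrow> 'v) \<Rightarrow> 'v set \<Rightarrow> ('v \<Rightarrow> 'v) \<Rightarrow> bool" where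
  "linear_on sc S T \<longleftrightarrow> (\<forall>x\<in>S. \<forall>y\<in>S. T (x + y) = T x + T y) \<and> (\<forall>a. \<forall>x\<in>S. T (sc a x) = sc a (T x))"

definition bounded_on :: "(complex \<Rightarrow> 'v::ab_group_add \<Rightarrow> 'v) \<Rightarrow> ('v \<Rightarrow> 'v \<Rightarrow> complex) \<Rightarrow> 'v set \<Rightarrow> ('v \<Rightarrow> 'v) \<Rightarrow> bool" where
  "bounded_on sc ip S T \<longleftrightarrow> linear_on sc S T \<and> (\<exists>C. \<forall>x\<in>S. cnorm ip (T x) \<le> C * cnorm ip x)"

text \<open>is_adjoint ip B C means C = B^*, i.e. (C x, y) = (x, B y) for all x, y.\<close>
definition is_adjoint :: "('v \<Rightarrow> 'v \<Rightarrow> complex) \<Rightarrow> ('v \<Rightarrow> 'v) \<Rightarrow> ('v \<Rightarrow> 'v) \<Rightarrow> bool" where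
  "is_adjoint ip B C \<longleftrightarrow> (\<forall>x y. ip (C x) y = ip x (B y))"

definition op_bar :: "('v \<Rightarrow> 'v) \<Rightarrow> ('v \<Rightarrow> 'v) \<Rightarrow> ('v \<Rightarrow> 'v)" where
  "op_bar J A = (\<lambda>x. J (A (J x)))"

text \<open>A^T = A, where A^T = (bar A)^*.\<close>
definition transpose_selfadj :: "('v \<Rightarrow> 'v \<Rightarrow> complex) \<Rightarrow> ('v \<Rightarrow> 'v) \<Rightarrow> ('v \<Rightarrow> 'v) \<Rightarrow> bool" where
  "transpose_selfadj ip J A \<longleftrightarrow> is_adjoint ip (op_bar J A) A"

definition cons_system :: "('v::ab_group_add \<Rightarrow> 'v \<Rightarrow> complex) \<Rightarrow> (nat \<Rightarrow> 'v) \<Rightarrow> bool" where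
  "cons_system ip e \<longleftrightarrow> (\<forall>i j. ip (e i) (e j) = (if i = j then 1 else 0))
     \<and> (\<forall>x. (\<forall>j. ip (e j) x = 0) \<longrightarrow> x = 0)"

definition hilbert_schmidt :: "(complex \<Rightarrow> 'v::ab_group_add \<Rightarrow> 'v) \<Rightarrow> ('v \<Rightarrow> 'v \<Rightarrow> complex) \<Rightarrow> ('v \<Rightarrow> 'v) \<Rightarrow> bool" where
  "hilbert_schmidt sc ip A \<longleftrightarrow> bounded_on sc ip UNIV A
     \<and> (\<exists>f. cons_system ip f \<and> summable (\<lambda>j. (cnorm ip (A (f j)))\<^sup>2))"

definition cspan :: "(complex \<Rightarrow> 'v::ab_group_add \<Rightarrow> 'v) \<Rightarrow> 'v set \<Rightarrow> 'v set" where
  "cspan sc S = {x. \<exists>(k::nat) c v. (\<forall>i<k. v i \<in> S) \<and> x = (\<Sum>i<k. sc (c i) (v i))}"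

definition cclosure :: "('v::ab_group_add \<Rightarrow> 'v \<Rightarrow> complex) \<Rightarrow> 'v set \<Rightarrow> 'v set" where
  "cclosure ip S = {x. \<forall>\<epsilon>>0. \<exists>y\<in>S. cnorm ip (x - y) < \<epsilon>}"

text \<open>Vectors a^dagger(f_n) ... a^dagger(f_1) Omega (the list is [f_n, ..., f_1]).\<close>
definition creation_vectors :: "('l \<Rightarrow> 'f \<Rightarrow> 'f) \<Rightarrow> 'f \<Rightarrow> nat \<Rightarrow> 'f set" where
  "creation_vectors ad \<Omega> n = {foldr ad fs \<Omega> | fs. length fs = n}"

definition nparticle :: "(complex \<Rightarrow> 'f::ab_group_add \<Rightarrow> 'f) \<Rightarrow> ('f \<Rightarrow> 'f \<Rightarrow> complex) \<Rightarrow> ('l \<Rightarrow> 'f \<Rightarrow> 'f) \<Rightarrow> 'f \<Rightarrow> nat \<Rightarrow> 'f set" where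
  "nparticle scF ipF ad \<Omega> n = cclosure ipF (cspan scF (creation_vectors ad \<Omega> n))"

text \<open>The operators are total functions; on each closed n-particle space they are
  required to be bounded linear, i.e. there they are the bounded extensions used in the text.\<close>
definition fock_rep ::
  "(complex \<Rightarrow> 'l::ab_group_add \<Rightarrow> 'l) \<Rightarrow> ('l \<Rightarrow> 'l \<Rightarrow> complex) \<Rightarrow> ('l \<Rightarrow> 'l)
   \<Rightarrow> (complex \<Rightarrow> 'f::ab_group_add \<Rightarrow> 'f) \<Rightarrow> ('f \<Rightarrow> 'f \<Rightarrow> complex) \<Rightarrow> 'f set
   \<Rightarrow> ('l \<Rightarrow> 'f \<Rightarrow> 'f) \<Rightarrow> ('l \<Rightarrow> 'f \<Rightarrow> 'f) \<Rightarrow> 'f \<Rightarrow> bool" where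
  "fock_rep scL ipL J scF ipF D a ad \<Omega> \<longleftrightarrow>
     chilbert scF ipF
   \<and> (\<forall>x\<in>D. \<forall>y\<in>D. x + y \<in> D) \<and> (\<forall>c. \<forall>x\<in>D. scF c x \<in> D)
   \<and> cclosure ipF D = UNIV
   \<and> \<Omega> \<in> D
   \<and> (\<forall>f. \<forall>\<Phi>\<in>D. a f \<Phi> \<in> D \<and> ad f \<Phi> \<in> D)
   \<and> (\<forall>f. linear_on scF D (a f) \<and> linear_on scF D (ad f))
   \<and> (\<forall>f g. \<forall>\<Phi>\<in>D. a (f + g) \<Phi> = a f \<Phi> + a g \<Phi> \<and> ad (f + g) \<Phi> = ad f \<Phi> + ad g \<Phi>)
   \<and> (\<forall>c f. \<forall>\<Phi>\<in>D. a (scL c f) \<Phi> = scF c (a f \<Phi>) \<and> ad (scL c f) \<Phi> = scF c (ad f \<Phi>))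
   \<and> (\<forall>f g. \<forall>\<Phi>\<in>D. a f (a g \<Phi>) = a g (a f \<Phi>)
                  \<and> ad f (ad g \<Phi>) = ad g (ad f \<Phi>)
                  \<and> a f (ad g \<Phi>) - ad g (a f \<Phi>) = scF (ipL (J f) g) \<Phi>)
   \<and> (\<forall>f. \<forall>\<Phi>\<in>D. \<forall>\<Psi>\<in>D. ipF (a f \<Phi>) \<Psi> = ipF \<Phi> (ad (J f) \<Psi>))
   \<and> ipF \<Omega> \<Omega> = 1
   \<and> (\<forall>f. a f \<Omega> = 0)
   \<and> cclosure ipF (cspan scF (\<Union>n. creation_vectors ad \<Omega> n)) = UNIV
   \<and> (\<forall>n f. bounded_on scF ipF (nparticle scF ipF ad \<Omega> n) (a f)
           \<and> bounded_on scF ipF (nparticle scF ipF ad \<Omega> n) (ad f))"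

text \<open>Delta_M(A) = sum_{j=1}^M a(A e_j) a(bar e_j); here the system is indexed from 0.\<close>
definition Delta :: "('l \<Rightarrow> 'f \<Rightarrow> 'f::comm_monoid_add) \<Rightarrow> ('l \<Rightarrow> 'l) \<Rightarrow> ('l \<Rightarrow> 'l) \<Rightarrow> (nat \<Rightarrow> 'l) \<Rightarrow> nat \<Rightarrow> 'f \<Rightarrow> 'f" where
  "Delta a J A e M \<Psi> = (\<Sum>j<M. a (A (e j)) (a (J (e j)) \<Psi>))"

end

theory Submission
  imports Defs
begin

section \<open>Vector space algebra\<close>

lemma cvs_add: "cvs sc \<Longrightarrow> sc a (x + y) = sc a x + sc a y" unfolding cvs_def by blast
lemma cvs_add2: "cvs sc \<Longrightarrow> sc (a + b) x = sc a x + sc b x" unfolding cvs_def by blast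
lemma cvs_mult: "cvs sc \<Longrightarrow> sc a (sc b x) = sc (a * b) x" unfolding cvs_def by blast
lemma cvs_one: "cvs sc \<Longrightarrow> sc 1 x = x" unfolding cvs_def by blast

lemma cvs_zero_left: assumes "cvs sc" shows "sc 0 x = 0"
proof -
  have "sc (0 + 0) x = sc 0 x + sc 0 x" using cvs_add2[OF assms] by blast
  then show ?thesis by simp
qed

lemma cvs_zero_right: assumes "cvs sc" shows "sc a 0 = 0"
proof -
  have "sc a (0 + 0) = sc a 0 + sc a 0" using cvs_add[OF assms] by blast
  then show ?thesis by simp
qed

lemma cvs_minus: assumes "cvs sc" shows "sc a (- x) = - sc a x"
proof -
  have "sc a (x + - x) = sc a x + sc a (- x)" using cvs_add[OF assms] by blast
  then show ?thesis using cvs_zero_right[OF assms] by (simp add: eq_neg_iff_add_eq_0 add.commute)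
qed

lemma cvs_diff: assumes "cvs sc" shows "sc a (x - y) = sc a x - sc a y"
  using cvs_add[OF assms, of a x "- y"] cvs_minus[OF assms] by simp

lemma cvs_neg_one: assumes "cvs sc" shows "sc (-1) x = - x"
proof -
  have "sc (1 + -1) x = sc 1 x + sc (-1) x" using cvs_add2[OF assms] by blast
  then have "0 = x + sc (-1) x" using cvs_zero_left[OF assms] cvs_one[OF assms] by simp
  then show ?thesis by (simp add: eq_neg_iff_add_eq_0 add.commute)
qed

lemma cvs_sum: assumes "cvs sc" shows "sc a (sum f K) = (\<Sum>i\<in>K. sc a (f i))"
proof (induction K rule: infinite_finite_induct)
  case (infinite A) then show ?case using cvs_zero_right[OF assms] by simp
next
  case empty then show ?case using cvs_zero_right[OF assms] by simp
next
  case (insert x F) then show ?case using cvs_add[OF assms] by simp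
qed

section \<open>Inner product algebra\<close>

context
  fixes sc :: "complex \<Rightarrow> 'v::ab_group_add \<Rightarrow> 'v" and ip :: "'v \<Rightarrow> 'v \<Rightarrow> complex"
  assumes H: "cinner_space sc ip"
begin

lemma H_cvs: "cvs sc" using H unfolding cinner_space_def by blast
lemma ip_add_right: "ip x (y + z) = ip x y + ip x z" using H unfolding cinner_space_def by blast
lemma ip_sc_right: "ip x (sc a y) = a * ip x y" using H unfolding cinner_space_def by blast
lemma ip_sym: "ip y x = cnj (ip x y)" using H unfolding cinner_space_def by blast
lemma ip_pos: "Re (ip x x) \<ge> 0" using H unfolding cinner_space_def by blast
lemma ip_def0: "ip x x = 0 \<Longrightarrow> x = 0" using H unfolding cinner_space_def by blast

lemma ip_add_left: "ip (x + y) z = ip x z + ip y z"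
  using ip_sym[of "x + y" z] ip_add_right[of z x y] ip_sym[of x z] ip_sym[of y z] by simp

lemma ip_sc_left: "ip (sc a x) y = cnj a * ip x y"
  using ip_sym[of "sc a x" y] ip_sc_right[of y a x] ip_sym[of x y] by simp

lemma ip_zero_right[simp]: "ip x 0 = 0"
  using ip_add_right[of x 0 0] by simp
lemma ip_zero_left[simp]: "ip 0 x = 0"
  using ip_add_left[of 0 0 x] by simp

lemma ip_minus_right: "ip x (- y) = - ip x y"
  using ip_add_right[of x y "- y"] by (simp add: eq_neg_iff_add_eq_0 add.commute)
lemma ip_minus_left: "ip (- x) y = - ip x y"
  using ip_add_left[of x "- x" y] by (simp add: eq_neg_iff_add_eq_0 add.commute)
lemma ip_diff_right: "ip x (y - z) = ip x y - ip x z"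
  using ip_add_right[of x y "- z"] ip_minus_right by simp
lemma ip_diff_left: "ip (x - y) z = ip x z - ip y z"
  using ip_add_left[of x "- y" z] ip_minus_left by simp

lemma ip_sum_right: "ip x (sum f K) = (\<Sum>i\<in>K. ip x (f i))"
  by (induction K rule: infinite_finite_induct) (auto simp: ip_add_right)
lemma ip_sum_left: "ip (sum f K) y = (\<Sum>i\<in>K. ip (f i) y)"
  by (induction K rule: infinite_finite_induct) (auto simp: ip_add_left)

lemma ip_self_real: "ip x x = complex_of_real (Re (ip x x))"
proof -
  have "ip x x = cnj (ip x x)" using ip_sym[of x x] .
  then have "Im (ip x x) = 0" by (metis complex_cnj_cancel_iff Reals_cnj_iff complex_is_Real_iff)
  then show ?thesis by (simp add: complex_eq_iff)
qed

lemma cnorm_sq: "(cnorm ip x)^2 = Re (ip x x)"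
  unfolding cnorm_def using ip_pos by simp
lemma cnorm_nonneg: "cnorm ip x \<ge> 0" unfolding cnorm_def using ip_pos[of x] by simp
lemma cnorm_zero[simp]: "cnorm ip 0 = 0" unfolding cnorm_def by simp

lemma cnorm_eq0: "cnorm ip x = 0 \<Longrightarrow> x = 0"
proof -
  assume "cnorm ip x = 0"
  then have "Re (ip x x) = 0" using cnorm_sq by (metis zero_power2)
  then have "ip x x = 0" using ip_self_real by (metis of_real_0)
  then show "x = 0" by (rule ip_def0)
qed

lemma cnorm_sc: "cnorm ip (sc a x) = cmod a * cnorm ip x"
proof -
  have "ip (sc a x) (sc a x) = cnj a * a * ip x x" using ip_sc_left ip_sc_right by simp
  also have "cnj a * a = complex_of_real ((cmod a)^2)" by (metis complex_norm_square mult.commute)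
  finally have "Re (ip (sc a x) (sc a x)) = (cmod a)^2 * Re (ip x x)"
    by (simp add: Re_complex_of_real)
  then show ?thesis unfolding cnorm_def by (simp add: real_sqrt_mult)
qed

lemma cnorm_minus: "cnorm ip (- x) = cnorm ip x"
  unfolding cnorm_def using ip_minus_left ip_minus_right by simp

lemma cnorm_commute: "cnorm ip (x - y) = cnorm ip (y - x)"
  using cnorm_minus[of "x - y"] by simp

lemma cauchy_schwarz: "cmod (ip x y) \<le> cnorm ip x * cnorm ip y"
proof (cases "y = 0")
  case True then show ?thesis by (simp add: cnorm_nonneg)
next
  case False
  define r where "r = Re (ip y y)"
  have r: "ip y y = complex_of_real r" unfolding r_def by (rule ip_self_real)
  have "r \<noteq> 0" using False ip_def0 r by force
  then have rpos: "r > 0" using ip_pos[of y] unfolding r_def by simp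
  define l where "l = ip y x / complex_of_real r"
  have "0 \<le> Re (ip (x - sc l y) (x - sc l y))" by (rule ip_pos)
  also have "ip (x - sc l y) (x - sc l y) = ip x x - l * ip x y - cnj l * ip y x + cnj l * l * ip y y"
    by (simp add: ip_diff_left ip_diff_right ip_sc_left ip_sc_right algebra_simps)
  also have "\<dots> = ip x x - complex_of_real ((cmod (ip x y))^2 / r)"
  proof -
    have yx: "ip y x = cnj (ip x y)" by (rule ip_sym)
    have "cnj (ip x y) * ip x y = complex_of_real ((cmod (ip x y))^2)"
      by (metis complex_norm_square mult.commute)
    then show ?thesis using rpos unfolding l_def r yx
      by (simp add: field_simps)
  qed
  finally have "(cmod (ip x y))^2 / r \<le> Re (ip x x)" by simp
  then have "(cmod (ip x y))^2 \<le> Re (ip x x) * r" using rpos by (simp add: field_simps)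
  also have "\<dots> = (cnorm ip x * cnorm ip y)^2" unfolding r_def using cnorm_sq by (simp add: power_mult_distrib)
  finally show ?thesis
    using cnorm_nonneg[of x] cnorm_nonneg[of y] by (meson mult_nonneg_nonneg power2_le_imp_le)
qed

lemma cnorm_triangle: "cnorm ip (x + y) \<le> cnorm ip x + cnorm ip y"
proof -
  have "Re (ip (x + y) (x + y)) = Re (ip x x) + Re (ip y y) + 2 * Re (ip x y)"
  proof -
    have "ip (x + y) (x + y) = ip x x + ip y y + (ip x y + cnj (ip x y))"
      using ip_sym[of y x] by (simp add: ip_add_left ip_add_right)
    then show ?thesis by simp
  qed
  also have "Re (ip x y) \<le> cnorm ip x * cnorm ip y"
    using cauchy_schwarz[of x y] complex_Re_le_cmod[of "ip x y"] by linarith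
  then have "Re (ip x x) + Re (ip y y) + 2 * Re (ip x y) \<le> (cnorm ip x + cnorm ip y)^2"
    using cnorm_sq[of x] cnorm_sq[of y] by (simp add: power2_sum)
  finally have "(cnorm ip (x + y))^2 \<le> (cnorm ip x + cnorm ip y)^2" using cnorm_sq by simp
  then show ?thesis using cnorm_nonneg[of x] cnorm_nonneg[of y] by (meson add_nonneg_nonneg power2_le_imp_le)
qed

lemma cnorm_diff_triangle: "cnorm ip (x - z) \<le> cnorm ip (x - y) + cnorm ip (y - z)"
  using cnorm_triangle[of "x - y" "y - z"] by simp

lemma cnorm_sum: "cnorm ip (sum f K) \<le> (\<Sum>i\<in>K. cnorm ip (f i))"
proof (induction K rule: infinite_finite_induct)
  case (insert x F)
  then show ?case using cnorm_triangle[of "f x" "sum f F"] by simp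
qed simp_all

lemma Re_ip_le: "Re (ip x y) \<le> cnorm ip x * cnorm ip y"
  using cauchy_schwarz[of x y] complex_Re_le_cmod[of "ip x y"] by linarith

end

lemma sum_split_add: "(\<Sum>i<(k::nat)+k'. f i) = (\<Sum>i<k. f i) + (\<Sum>i<k'. f (i + k))"
proof -
  have "(\<Sum>i<k+k'. f i) = (\<Sum>i\<in>{0..<k}. f i) + (\<Sum>i\<in>{k..<k+k'}. f i)"
    by (simp add: lessThan_atLeast0 sum.atLeastLessThan_concat)
  also have "(\<Sum>i\<in>{k..<k+k'}. f i) = (\<Sum>i\<in>{0..<k'}. f (i + k))"
    using sum.shift_bounds_nat_ivl[of f 0 k k'] by (simp add: add.commute)
  finally show ?thesis by (simp add: lessThan_atLeast0)
qed

context fixes sc :: "complex \<Rightarrow> 'v::ab_group_add \<Rightarrow> 'v" assumes V: "cvs sc"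
begin

lemma cspan_zero: "0 \<in> cspan sc S"
  unfolding cspan_def by (auto intro!: exI[of _ 0])

lemma cspan_base: "v \<in> S \<Longrightarrow> v \<in> cspan sc S"
  unfolding cspan_def using cvs_one[OF V]
  by (auto intro!: exI[of _ 1] exI[of _ "\<lambda>_. 1"] exI[of _ "\<lambda>_. v"])

lemma cspan_add: assumes "x \<in> cspan sc S" "y \<in> cspan sc S" shows "x + y \<in> cspan sc S"
proof -
  obtain k :: nat and c v where x: "\<forall>i<k. v i \<in> S" "x = (\<Sum>i<k. sc (c i) (v i))"
    using assms(1) unfolding cspan_def by blast
  obtain k' :: nat and d u where y: "\<forall>i<k'. u i \<in> S" "y = (\<Sum>i<k'. sc (d i) (u i))"
    using assms(2) unfolding cspan_def by blast
  define c' where "c' = (\<lambda>i. if i < k then c i else d (i - k))"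
  define v' where "v' = (\<lambda>i. if i < k then v i else u (i - k))"
  have "(\<Sum>i<k+k'. sc (c' i) (v' i)) = (\<Sum>i<k. sc (c' i) (v' i)) + (\<Sum>i<k'. sc (c' (i+k)) (v' (i+k)))"
    by (rule sum_split_add)
  also have "\<dots> = x + y" unfolding x y c'_def v'_def by simp
  finally have "x + y = (\<Sum>i<k+k'. sc (c' i) (v' i))" by simp
  moreover have "\<forall>i<k+k'. v' i \<in> S" using x y unfolding v'_def by auto
  ultimately show ?thesis unfolding cspan_def
    by (intro CollectI exI[of _ "k+k'"] exI[of _ c'] exI[of _ v']) simp
qed

lemma cspan_sc: assumes "x \<in> cspan sc S" shows "sc a x \<in> cspan sc S"
proof -
  obtain k :: nat and c v where x: "\<forall>i<k. v i \<in> S" "x = (\<Sum>i<k. sc (c i) (v i))"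
    using assms(1) unfolding cspan_def by blast
  have "sc a x = (\<Sum>i<k. sc (a * c i) (v i))"
    unfolding x by (simp add: cvs_sum[OF V] cvs_mult[OF V])
  then show ?thesis using x(1) unfolding cspan_def
    by (intro CollectI exI[of _ k] exI[of _ "\<lambda>i. a * c i"] exI[of _ v]) simp
qed

lemma cspan_sum: "(\<And>i. i \<in> K \<Longrightarrow> f i \<in> cspan sc S) \<Longrightarrow> sum f K \<in> cspan sc S"
  by (induction K rule: infinite_finite_induct) (auto simp: cspan_zero cspan_add)

lemma cspan_diff: assumes "x \<in> cspan sc S" "y \<in> cspan sc S" shows "x - y \<in> cspan sc S"
  using cspan_add[OF assms(1) cspan_sc[OF assms(2), of "-1"]] cvs_neg_one[OF V] by simp

end

context
  fixes sc :: "complex \<Rightarrow> 'v::ab_group_add \<Rightarrow> 'v" and ip :: "'v \<Rightarrow> 'v \<Rightarrow> complex"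
  assumes H: "cinner_space sc ip"
begin

lemma cclosure_base: "x \<in> S \<Longrightarrow> x \<in> cclosure ip S"
  unfolding cclosure_def using cnorm_zero[OF H] by (auto intro!: bexI[of _ x])

lemma cspan_closure_add:
  assumes "x \<in> cclosure ip (cspan sc S)" "y \<in> cclosure ip (cspan sc S)"
  shows "x + y \<in> cclosure ip (cspan sc S)"
  unfolding cclosure_def
proof (intro CollectI allI impI)
  fix e :: real assume e: "e > 0"
  have e2: "e/2 > 0" using e by simp
  have ax: "\<forall>\<epsilon>>0. \<exists>z\<in>cspan sc S. cnorm ip (x - z) < \<epsilon>" using assms(1) unfolding cclosure_def by simp
  have ay: "\<forall>\<epsilon>>0. \<exists>z\<in>cspan sc S. cnorm ip (y - z) < \<epsilon>" using assms(2) unfolding cclosure_def by simp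
  obtain x' where x': "x' \<in> cspan sc S" "cnorm ip (x - x') < e/2" using ax e2 by blast
  obtain y' where y': "y' \<in> cspan sc S" "cnorm ip (y - y') < e/2" using ay e2 by blast
  have eq: "(x + y) - (x' + y') = (x - x') + (y - y')" by (simp add: algebra_simps)
  have "cnorm ip ((x + y) - (x' + y')) \<le> cnorm ip (x - x') + cnorm ip (y - y')"
    unfolding eq by (rule cnorm_triangle[OF H])
  then have "cnorm ip ((x + y) - (x' + y')) < e" using x'(2) y'(2) by linarith
  then show "\<exists>z\<in>cspan sc S. cnorm ip (x + y - z) < e"
    using cspan_add[OF H_cvs[OF H] x'(1) y'(1)] by blast
qed

lemma cspan_closure_sc:
  assumes "x \<in> cclosure ip (cspan sc S)"
  shows "sc a x \<in> cclosure ip (cspan sc S)"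
  unfolding cclosure_def
proof (intro CollectI allI impI)
  fix e :: real assume e: "e > 0"
  have ca: "cmod a + 1 > 0" by (smt (verit) norm_ge_zero)
  then have pos: "e / (cmod a + 1) > 0" using e by simp
  have ax: "\<forall>\<epsilon>>0. \<exists>z\<in>cspan sc S. cnorm ip (x - z) < \<epsilon>" using assms(1) unfolding cclosure_def by simp
  obtain x' where x': "x' \<in> cspan sc S" "cnorm ip (x - x') < e / (cmod a + 1)"
    using ax pos by blast
  have "cnorm ip (sc a x - sc a x') = cmod a * cnorm ip (x - x')"
    using cnorm_sc[OF H, of a "x - x'"] cvs_diff[OF H_cvs[OF H]] by simp
  also have "\<dots> \<le> (cmod a + 1) * cnorm ip (x - x')"
    using cnorm_nonneg[OF H] by (simp add: mult_right_mono)
  also have "\<dots> < e" using x'(2) ca by (simp add: pos_less_divide_eq mult.commute)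
  finally have "cnorm ip (sc a x - sc a x') < e" .
  then show "\<exists>z\<in>cspan sc S. cnorm ip (sc a x - z) < e"
    using x' cspan_sc[OF H_cvs[OF H] x'(1)] by blast
qed

lemma cspan_closure_diff:
  assumes "x \<in> cclosure ip (cspan sc S)" "y \<in> cclosure ip (cspan sc S)"
  shows "x - y \<in> cclosure ip (cspan sc S)"
  using cspan_closure_add[OF assms(1) cspan_closure_sc[OF assms(2), of "-1"]] cvs_neg_one[OF H_cvs[OF H]] by simp

lemma cspan_in_closure: "x \<in> cspan sc S \<Longrightarrow> x \<in> cclosure ip (cspan sc S)"
  by (rule cclosure_base)

end

lemma R_telescope:
  fixes s :: "nat \<Rightarrow> real"
  assumes s: "\<And>i. 0 \<le> s i"
  defines "P \<equiv> \<lambda>n. 1 + (\<Sum>i<n. s i)"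
  shows "(\<Sum>k<n. s k / (P (Suc k))^2) \<le> 1 - 1 / P n"
proof (induction n)
  case 0 show ?case by (simp add: P_def)
next
  case (Suc n)
  have Pn: "P n \<ge> 1" unfolding P_def using s by (simp add: sum_nonneg)
  have PS: "P (Suc n) = P n + s n" unfolding P_def by simp
  have "s n / (P (Suc n))^2 \<le> 1 / P n - 1 / P (Suc n)"
  proof -
    have "1 / P n - 1 / P (Suc n) = s n / (P n * P (Suc n))"
      using Pn s[of n] by (simp add: PS field_simps)
    moreover have "s n / (P (Suc n))^2 \<le> s n / (P n * P (Suc n))"
      using Pn s[of n] by (intro divide_left_mono) (auto simp: PS power2_eq_square intro!: mult_right_mono mult_pos_pos)
    ultimately show ?thesis by simp
  qed
  then show ?case using Suc by simp
qed

lemma R2: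
  fixes s :: "nat \<Rightarrow> real"
  assumes s: "\<And>i. 0 \<le> s i"
  shows "summable (\<lambda>k. s k / (1 + (\<Sum>i<Suc k. s i))^2)"
proof (rule summableI_nonneg_bounded)
  fix n
  show "0 \<le> s n / (1 + (\<Sum>i<Suc n. s i))\<^sup>2" using s by simp
  have "1 / (1 + (\<Sum>i<n. s i)) \<ge> 0" using s by (simp add: sum_nonneg)
  then show "(\<Sum>k<n. s k / (1 + (\<Sum>i<Suc k. s i))\<^sup>2) \<le> 1"
    using R_telescope[of s n, OF s] by linarith
qed

lemma R_unbounded:
  fixes s :: "nat \<Rightarrow> real"
  assumes s: "\<And>i. 0 \<le> s i" and ns: "\<not> summable s"
  shows "\<exists>n. B < 1 + (\<Sum>i<n. s i)"
proof (rule ccontr)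
  assume nn: "\<not> ?thesis"
  have "\<And>n. (\<Sum>i<n. s i) \<le> B"
  proof -
    fix n
    have "1 + (\<Sum>i<n. s i) \<le> B" using nn not_less by blast
    then show "(\<Sum>i<n. s i) \<le> B" by linarith
  qed
  then have "summable s" using s by (intro summableI_nonneg_bounded) auto
  then show False using ns by simp
qed

lemma R_block:
  fixes s :: "nat \<Rightarrow> real"
  assumes s: "\<And>i. 0 \<le> s i" and ns: "\<not> summable s"
  shows "\<exists>M. real B / 2 \<le> (\<Sum>k<M. s k / (1 + (\<Sum>i<Suc k. s i)))"
proof (induction B)
  case 0 show ?case by (auto intro!: exI[of _ 0])
next
  case (Suc B)
  define P where "P = (\<lambda>n. 1 + (\<Sum>i<n. s i))"
  have mono: "P m \<le> P n" if "m \<le> n" for m n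
    unfolding P_def using s that by (auto intro!: sum_mono2)
  have P1: "P n \<ge> 1" for n unfolding P_def using s by (simp add: sum_nonneg)
  from Suc obtain M where M: "real B / 2 \<le> (\<Sum>k<M. s k / P (Suc k))" unfolding P_def by blast
  obtain n0 where n0: "2 * P M < P n0" using R_unbounded[OF s ns, of "2 * P M"] unfolding P_def by blast
  define n where "n = max n0 M"
  have Mn: "M \<le> n" and "n0 \<le> n" unfolding n_def by auto
  then have n: "2 * P M \<le> P n" using n0 mono[of n0 n] by simp
  have split: "(\<Sum>k<n. s k / P (Suc k)) = (\<Sum>k<M. s k / P (Suc k)) + (\<Sum>k\<in>{M..<n}. s k / P (Suc k))"
    using Mn by (simp add: lessThan_atLeast0 sum.atLeastLessThan_concat)
  have "(\<Sum>k\<in>{M..<n}. s k / P n) \<le> (\<Sum>k\<in>{M..<n}. s k / P (Suc k))"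
  proof (rule sum_mono)
    fix k assume "k \<in> {M..<n}"
    then have "P (Suc k) \<le> P n" using mono by simp
    then show "s k / P n \<le> s k / P (Suc k)"
      using s[of k] P1[of "Suc k"] by (intro divide_left_mono) auto
  qed
  moreover have "(\<Sum>k\<in>{M..<n}. s k / P n) = (P n - P M) / P n"
  proof -
    have "(\<Sum>k\<in>{M..<n}. s k) = P n - P M"
      unfolding P_def using Mn
      by (simp add: lessThan_atLeast0 sum.atLeastLessThan_concat[symmetric, of 0 M n])
    then show ?thesis by (metis sum_divide_distrib)
  qed
  moreover have "(P n - P M) / P n \<ge> 1/2" using n P1[of n] P1[of M] by (simp add: field_simps)
  ultimately have "1/2 \<le> (\<Sum>k\<in>{M..<n}. s k / P (Suc k))" by linarith
  with M split have "real (Suc B) / 2 \<le> (\<Sum>k<n. s k / P (Suc k))" by simp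
  then show ?case unfolding P_def by blast
qed

lemma R1:
  fixes s :: "nat \<Rightarrow> real"
  assumes s: "\<And>i. 0 \<le> s i" and ns: "\<not> summable s"
  shows "\<exists>M. B < (\<Sum>k<M. s k / (1 + (\<Sum>i<Suc k. s i)))"
proof -
  obtain N :: nat where N: "2 * B < real N" using reals_Archimedean2 by blast
  obtain M where "real N / 2 \<le> (\<Sum>k<M. s k / (1 + (\<Sum>i<Suc k. s i)))"
    using R_block[OF s ns] by blast
  then show ?thesis using N by (intro exI[of _ M]) linarith
qed

lemma bessel:
  assumes H: "cinner_space sc ip" and on: "\<And>i j. ip (e i) (e j) = (if i = j then 1 else 0)"
    and fin: "finite K"
  shows "(\<Sum>j\<in>K. (cmod (ip (e j) x))^2) \<le> Re (ip x x)"
proof -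
  define al where "al = (\<lambda>j. ip (e j) x)"
  define y where "y = (\<Sum>j\<in>K. sc (al j) (e j))"
  have nsq: "cnj (al j) * al j = complex_of_real ((cmod (al j))^2)" for j
    by (metis complex_norm_square mult.commute)
  have xy: "ip x y = (\<Sum>j\<in>K. complex_of_real ((cmod (al j))^2))"
    unfolding y_def using nsq
    by (simp add: ip_sum_right[OF H] ip_sc_right[OF H] ip_sym[OF H, of x] al_def mult.commute)
  have yx: "ip y x = (\<Sum>j\<in>K. complex_of_real ((cmod (al j))^2))"
    unfolding y_def using nsq
    by (simp add: ip_sum_left[OF H] ip_sc_left[OF H] al_def)
  have yy: "ip y y = (\<Sum>j\<in>K. complex_of_real ((cmod (al j))^2))"
  proof -
    have d: "\<And>(x::complex) P. x * (if P then 1 else 0) = (if P then x else 0)" by simp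
    have "ip y y = (\<Sum>i\<in>K. cnj (al i) * al i)"
      unfolding y_def using fin
      by (simp add: ip_sum_left[OF H] ip_sum_right[OF H] ip_sc_left[OF H] ip_sc_right[OF H] on d
          sum_distrib_left sum.delta mult.commute)
    then show ?thesis using nsq by simp
  qed
  have "0 \<le> Re (ip (x - y) (x - y))" by (rule ip_pos[OF H])
  also have "ip (x - y) (x - y) = ip x x - ip x y - ip y x + ip y y"
    by (simp add: ip_diff_left[OF H] ip_diff_right[OF H])
  finally show ?thesis unfolding xy yx yy al_def by (simp add: Re_sum)
qed

context
  fixes scL :: "complex \<Rightarrow> 'l::ab_group_add \<Rightarrow> 'l" and ipL :: "'l \<Rightarrow> 'l \<Rightarrow> complex"
    and J :: "'l \<Rightarrow> 'l"
    and scF :: "complex \<Rightarrow> 'f::ab_group_add \<Rightarrow> 'f" and ipF :: "'f \<Rightarrow> 'f \<Rightarrow> complex"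
    and D :: "'f set" and a ad :: "'l \<Rightarrow> 'f \<Rightarrow> 'f" and \<Omega> :: 'f
  assumes HL: "cinner_space scL ipL"
    and Jc: "conjugation scL ipL J"
    and FR: "fock_rep scL ipL J scF ipF D a ad \<Omega>"
begin

lemma HF: "cinner_space scF ipF" using FR unfolding fock_rep_def chilbert_def by blast
lemma VF: "cvs scF" using H_cvs[OF HF] .
lemma JJ[simp]: "J (J x) = x" using Jc unfolding conjugation_def by blast
lemma ipJ: "ipL (J x) (J y) = ipL y x" using Jc unfolding conjugation_def by blast
lemma D_add: "x \<in> D \<Longrightarrow> y \<in> D \<Longrightarrow> x + y \<in> D" using FR unfolding fock_rep_def by auto
lemma D_sc: "x \<in> D \<Longrightarrow> scF c x \<in> D" using FR unfolding fock_rep_def by auto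
lemma Om_D: "\<Omega> \<in> D" using FR unfolding fock_rep_def by auto
lemma a_D: "x \<in> D \<Longrightarrow> a f x \<in> D" using FR unfolding fock_rep_def by auto
lemma ad_D: "x \<in> D \<Longrightarrow> ad f x \<in> D" using FR unfolding fock_rep_def by auto
lemma a_lin: "linear_on scF D (a f)" using FR unfolding fock_rep_def by auto
lemma ad_lin: "linear_on scF D (ad f)" using FR unfolding fock_rep_def by auto
lemma CCR: "\<Phi> \<in> D \<Longrightarrow> a f (ad g \<Phi>) - ad g (a f \<Phi>) = scF (ipL (J f) g) \<Phi>"
  using FR unfolding fock_rep_def by auto
lemma adj: "\<Phi> \<in> D \<Longrightarrow> \<Psi> \<in> D \<Longrightarrow> ipF (a f \<Phi>) \<Psi> = ipF \<Phi> (ad (J f) \<Psi>)"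
  using FR unfolding fock_rep_def by auto
lemma Om_norm: "ipF \<Omega> \<Omega> = 1" using FR unfolding fock_rep_def by auto
lemma a_Om: "a f \<Omega> = 0" using FR unfolding fock_rep_def by auto
lemma a_bnd: "bounded_on scF ipF (nparticle scF ipF ad \<Omega> n) (a f)"
  using FR unfolding fock_rep_def by auto

lemma D0: "0 \<in> D" using D_sc[OF Om_D, of 0] cvs_zero_left[OF VF] by simp

lemma a_add: "x \<in> D \<Longrightarrow> y \<in> D \<Longrightarrow> a f (x + y) = a f x + a f y"
  using a_lin unfolding linear_on_def by blast
lemma a_sc: "x \<in> D \<Longrightarrow> a f (scF c x) = scF c (a f x)"
  using a_lin unfolding linear_on_def by blast
lemma ad_add: "x \<in> D \<Longrightarrow> y \<in> D \<Longrightarrow> ad f (x + y) = ad f x + ad f y"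
  using ad_lin unfolding linear_on_def by blast
lemma ad_sc: "x \<in> D \<Longrightarrow> ad f (scF c x) = scF c (ad f x)"
  using ad_lin unfolding linear_on_def by blast

lemma ad_zero: "ad f 0 = 0"
  using ad_add[OF D0 D0, of f] by simp
lemma a_zero: "a f 0 = 0"
  using a_add[OF D0 D0, of f] by simp

lemma D_sum: "(\<And>i. i \<in> K \<Longrightarrow> v i \<in> D) \<Longrightarrow> sum v K \<in> D"
  by (induction K rule: infinite_finite_induct) (auto simp: D0 D_add)

lemma a_sum: "(\<And>i. i \<in> K \<Longrightarrow> v i \<in> D) \<Longrightarrow> a f (sum v K) = (\<Sum>i\<in>K. a f (v i))"
proof (induction K rule: infinite_finite_induct)
  case (insert x F)
  then show ?case by (simp add: a_add D_sum)
qed (simp_all add: a_zero)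

lemma a_ad_Om: "a f (ad g \<Omega>) = scF (ipL (J f) g) \<Omega>"
  using CCR[OF Om_D, of f g] a_Om ad_zero by simp

lemma a_ad_ad_Om: "a f (ad g (ad h \<Omega>)) = scF (ipL (J f) h) (ad g \<Omega>) + scF (ipL (J f) g) (ad h \<Omega>)"
proof -
  have "a f (ad g (ad h \<Omega>)) = ad g (a f (ad h \<Omega>)) + scF (ipL (J f) g) (ad h \<Omega>)"
    using CCR[OF ad_D[OF Om_D], of f g h] by (simp add: algebra_simps)
  also have "ad g (a f (ad h \<Omega>)) = scF (ipL (J f) h) (ad g \<Omega>)"
    unfolding a_ad_Om by (rule ad_sc[OF Om_D])
  finally show ?thesis .
qed

lemma ip_ad_left: "\<Phi> \<in> D \<Longrightarrow> \<Psi> \<in> D \<Longrightarrow> ipF (ad f \<Phi>) \<Psi> = ipF \<Phi> (a (J f) \<Psi>)"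
proof -
  assume D: "\<Phi> \<in> D" "\<Psi> \<in> D"
  have "ipF (a (J f) \<Psi>) \<Phi> = ipF \<Psi> (ad f \<Phi>)" using adj[OF D(2) D(1), of "J f"] by simp
  then show ?thesis using ip_sym[OF HF, of "ad f \<Phi>" \<Psi>] ip_sym[OF HF, of "a (J f) \<Psi>" \<Phi>]
    by (metis complex_cnj_cnj)
qed

lemma gram1: "ipF (ad g \<Omega>) (ad h \<Omega>) = ipL g h"
  using ip_ad_left[OF Om_D ad_D[OF Om_D], of g h] a_ad_Om Om_norm
  by (simp add: ip_sc_right[OF HF])

lemma gram2: "ipF (ad f (ad g \<Omega>)) (ad h (ad k \<Omega>)) = ipL f k * ipL g h + ipL f h * ipL g k"
  using ip_ad_left[OF ad_D[OF Om_D] ad_D[OF ad_D[OF Om_D]], of f g h k]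
  by (simp add: a_ad_ad_Om ip_add_right[OF HF] ip_sc_right[OF HF] gram1)

lemma Om_aa: "\<Phi> \<in> D \<Longrightarrow> ipF \<Omega> (a x (a y \<Phi>)) = ipF (ad (J y) (ad (J x) \<Omega>)) \<Phi>"
proof -
  assume D: "\<Phi> \<in> D"
  have "ipF \<Omega> (a x (a y \<Phi>)) = cnj (ipF (a x (a y \<Phi>)) \<Omega>)" by (rule ip_sym[OF HF])
  also have "ipF (a x (a y \<Phi>)) \<Omega> = ipF (a y \<Phi>) (ad (J x) \<Omega>)"
    by (rule adj[OF a_D[OF D] Om_D])
  also have "\<dots> = ipF \<Phi> (ad (J y) (ad (J x) \<Omega>))"
    by (rule adj[OF D ad_D[OF Om_D]])
  finally show ?thesis using ip_sym[OF HF, of \<Phi>] by simp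
qed

end

context
  fixes scL :: "complex \<Rightarrow> 'l::ab_group_add \<Rightarrow> 'l" and ipL :: "'l \<Rightarrow> 'l \<Rightarrow> complex"
    and J :: "'l \<Rightarrow> 'l"
    and scF :: "complex \<Rightarrow> 'f::ab_group_add \<Rightarrow> 'f" and ipF :: "'f \<Rightarrow> 'f \<Rightarrow> complex"
    and D :: "'f set" and a ad :: "'l \<Rightarrow> 'f \<Rightarrow> 'f" and \<Omega> :: 'f
  assumes HL: "cinner_space scL ipL"
    and Jc: "conjugation scL ipL J"
    and FR: "fock_rep scL ipL J scF ipF D a ad \<Omega>"
begin

abbreviation "NP n \<equiv> nparticle scF ipF ad \<Omega> n"

lemma NP_diff: "x \<in> NP n \<Longrightarrow> y \<in> NP n \<Longrightarrow> x - y \<in> NP n"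
  unfolding nparticle_def by (rule cspan_closure_diff[OF HF[OF HL Jc FR]])

lemma a_const: "\<exists>C\<ge>0. \<forall>x\<in>NP n. cnorm ipF (a f x) \<le> C * cnorm ipF x"
proof -
  obtain C where C: "\<forall>x\<in>NP n. cnorm ipF (a f x) \<le> C * cnorm ipF x"
    using a_bnd[OF HL Jc FR, of n f] unfolding bounded_on_def by blast
  have "\<forall>x\<in>NP n. cnorm ipF (a f x) \<le> max C 0 * cnorm ipF x"
  proof
    fix x assume "x \<in> NP n"
    then have "cnorm ipF (a f x) \<le> C * cnorm ipF x" using C by blast
    also have "\<dots> \<le> max C 0 * cnorm ipF x"
      using cnorm_nonneg[OF HF[OF HL Jc FR]] by (intro mult_right_mono) auto
    finally show "cnorm ipF (a f x) \<le> max C 0 * cnorm ipF x" .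
  qed
  then show ?thesis by (intro exI[of _ "max C 0"]) auto
qed

lemma a_lin_diff: "x \<in> NP n \<Longrightarrow> y \<in> NP n \<Longrightarrow> a f x - a f y = a f (x - y)"
proof -
  assume xy: "x \<in> NP n" "y \<in> NP n"
  have "linear_on scF (NP n) (a f)"
    using a_bnd[OF HL Jc FR, of n f] unfolding bounded_on_def by blast
  then have "a f ((x - y) + y) = a f (x - y) + a f y"
    using NP_diff[OF xy] xy(2) unfolding linear_on_def by blast
  then show ?thesis by (simp add: algebra_simps)
qed

lemma cv2: "v \<in> creation_vectors ad \<Omega> 2 \<Longrightarrow> \<exists>g h. v = ad g (ad h \<Omega>)"
proof -
  assume "v \<in> creation_vectors ad \<Omega> 2"
  then obtain fs where fs: "v = foldr ad fs \<Omega>" "length fs = 2" unfolding creation_vectors_def by blast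
  then obtain g h where "fs = [g, h]"
    by (metis (no_types, opaque_lifting) One_nat_def Suc_1 length_0_conv length_Suc_conv)
  then show ?thesis using fs by auto
qed

lemma cv1: "ad g \<Omega> \<in> creation_vectors ad \<Omega> 1"
  unfolding creation_vectors_def by (auto intro!: exI[of _ "[g]"])

lemma cv2_mem: "ad g (ad h \<Omega>) \<in> creation_vectors ad \<Omega> 2"
  unfolding creation_vectors_def by (auto intro!: exI[of _ "[g, h]"])

lemma a_span_2_1:
  assumes "z \<in> cspan scF (creation_vectors ad \<Omega> 2)"
  shows "a f z \<in> cspan scF (creation_vectors ad \<Omega> 1)"
proof -
  note V = VF[OF HL Jc FR]
  obtain k :: nat and c v where z: "\<forall>i<k. v i \<in> creation_vectors ad \<Omega> 2" "z = (\<Sum>i<k. scF (c i) (v i))"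
    using assms unfolding cspan_def by blast
  have vD: "v i \<in> D" if "i < k" for i
    using cv2[of "v i"] z(1) that ad_D[OF HL Jc FR] Om_D[OF HL Jc FR] by metis
  have "a f z = (\<Sum>i<k. a f (scF (c i) (v i)))"
    unfolding z(2) by (rule a_sum[OF HL Jc FR]) (simp add: D_sc[OF HL Jc FR] vD)
  also have "\<dots> = (\<Sum>i<k. scF (c i) (a f (v i)))"
    by (rule sum.cong) (simp_all add: a_sc[OF HL Jc FR] vD)
  also have "\<dots> \<in> cspan scF (creation_vectors ad \<Omega> 1)"
  proof (rule cspan_sum[OF V])
    fix i assume "i \<in> {..<k}"
    then obtain g h where gh: "v i = ad g (ad h \<Omega>)" using z(1) cv2 by blast
    have "a f (v i) = scF (ipL (J f) h) (ad g \<Omega>) + scF (ipL (J f) g) (ad h \<Omega>)"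
      unfolding gh by (rule a_ad_ad_Om[OF HL Jc FR])
    also have "\<dots> \<in> cspan scF (creation_vectors ad \<Omega> 1)"
      by (intro cspan_add[OF V] cspan_sc[OF V] cspan_base[OF V] cv1)
    finally show "scF (c i) (a f (v i)) \<in> cspan scF (creation_vectors ad \<Omega> 1)"
      by (rule cspan_sc[OF V])
  qed
  finally show ?thesis .
qed

lemma a_maps_2_1:
  assumes x: "x \<in> NP 2"
  shows "a f x \<in> NP 1"
  unfolding nparticle_def cclosure_def
proof (intro CollectI allI impI)
  note HF' = HF[OF HL Jc FR]
  fix e :: real assume e: "e > 0"
  obtain C where C: "C \<ge> 0" "\<forall>x\<in>NP 2. cnorm ipF (a f x) \<le> C * cnorm ipF x"
    using a_const by blast
  have pos: "e / (C + 1) > 0" using e C(1) by simp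
  have "\<forall>\<epsilon>>0. \<exists>z\<in>cspan scF (creation_vectors ad \<Omega> 2). cnorm ipF (x - z) < \<epsilon>"
    using x unfolding nparticle_def cclosure_def by simp
  then obtain z where z: "z \<in> cspan scF (creation_vectors ad \<Omega> 2)" "cnorm ipF (x - z) < e / (C + 1)"
    using pos by blast
  have zN: "z \<in> NP 2" unfolding nparticle_def by (rule cspan_in_closure[OF HF' z(1)])
  have "cnorm ipF (a f x - a f z) = cnorm ipF (a f (x - z))" by (simp add: a_lin_diff[OF x zN])
  also have "\<dots> \<le> C * cnorm ipF (x - z)" using C(2) NP_diff[OF x zN] by blast
  also have "\<dots> \<le> (C + 1) * cnorm ipF (x - z)"
    using cnorm_nonneg[OF HF'] by (simp add: mult_right_mono)
  also have "\<dots> < e" using z(2) C(1) by (simp add: pos_less_divide_eq mult.commute)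
  finally have "cnorm ipF (a f x - a f z) < e" .
  then show "\<exists>y\<in>cspan scF (creation_vectors ad \<Omega> 1). cnorm ipF (a f x - y) < e"
    using a_span_2_1[OF z(1)] by blast
qed

lemma aa_cont:
  assumes X: "X \<in> NP 2" and Y: "Y \<in> NP 2"
  shows "\<exists>K\<ge>0. \<forall>X\<in>NP 2. \<forall>Y\<in>NP 2. cnorm ipF (a x (a y X) - a x (a y Y)) \<le> K * cnorm ipF (X - Y)"
proof -
  note HF' = HF[OF HL Jc FR]
  obtain C1 where C1: "C1 \<ge> 0" "\<forall>x\<in>NP 2. cnorm ipF (a y x) \<le> C1 * cnorm ipF x"
    using a_const by blast
  obtain C2 where C2: "C2 \<ge> 0" "\<forall>z\<in>NP 1. cnorm ipF (a x z) \<le> C2 * cnorm ipF z"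
    using a_const by blast
  have "cnorm ipF (a x (a y X) - a x (a y Y)) \<le> (C2 * C1) * cnorm ipF (X - Y)"
    if X: "X \<in> NP 2" and Y: "Y \<in> NP 2" for X Y
  proof -
    have 1: "a y X \<in> NP 1" "a y Y \<in> NP 1" using a_maps_2_1 X Y by auto
    have "a x (a y X) - a x (a y Y) = a x (a y X - a y Y)" by (rule a_lin_diff[OF 1])
    also have "\<dots> = a x (a y (X - Y))" by (simp add: a_lin_diff[OF X Y])
    finally have eq: "a x (a y X) - a x (a y Y) = a x (a y (X - Y))" .
    have d: "X - Y \<in> NP 2" using NP_diff[OF X Y] .
    have "cnorm ipF (a x (a y (X - Y))) \<le> C2 * cnorm ipF (a y (X - Y))"
      using C2(2) a_maps_2_1[OF d] by blast
    also have "\<dots> \<le> C2 * (C1 * cnorm ipF (X - Y))"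
      using C1(2) d C2(1) by (intro mult_left_mono) auto
    finally show ?thesis unfolding eq by (simp add: mult.assoc)
  qed
  then show ?thesis using C1(1) C2(1) by (intro exI[of _ "C2 * C1"]) auto
qed

lemma Delta_cont:
  fixes x y :: "nat \<Rightarrow> 'l" and M :: nat
  shows "\<exists>K\<ge>0. \<forall>X\<in>NP 2. \<forall>Y\<in>NP 2.
     cnorm ipF ((\<Sum>j<M. a (x j) (a (y j) X)) - (\<Sum>j<M. a (x j) (a (y j) Y))) \<le> K * cnorm ipF (X - Y)"
proof (induction M)
  case 0 show ?case by (auto simp: cnorm_zero[OF HF[OF HL Jc FR]])
next
  case (Suc M)
  note HF' = HF[OF HL Jc FR]
  from Suc obtain K where K: "K \<ge> 0" "\<forall>X\<in>NP 2. \<forall>Y\<in>NP 2.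
     cnorm ipF ((\<Sum>j<M. a (x j) (a (y j) X)) - (\<Sum>j<M. a (x j) (a (y j) Y))) \<le> K * cnorm ipF (X - Y)"
    by blast
  have "\<Omega> \<in> NP 2 \<or> True" by simp
  obtain K1 where K1: "K1 \<ge> 0" "\<forall>X\<in>NP 2. \<forall>Y\<in>NP 2. cnorm ipF (a (x M) (a (y M) X) - a (x M) (a (y M) Y)) \<le> K1 * cnorm ipF (X - Y)"
    using aa_cont by blast
  have "cnorm ipF ((\<Sum>j<Suc M. a (x j) (a (y j) X)) - (\<Sum>j<Suc M. a (x j) (a (y j) Y))) \<le> (K + K1) * cnorm ipF (X - Y)"
    if X: "X \<in> NP 2" and Y: "Y \<in> NP 2" for X Y
  proof -
    have eq: "(\<Sum>j<Suc M. a (x j) (a (y j) X)) - (\<Sum>j<Suc M. a (x j) (a (y j) Y))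
      = ((\<Sum>j<M. a (x j) (a (y j) X)) - (\<Sum>j<M. a (x j) (a (y j) Y))) + (a (x M) (a (y M) X) - a (x M) (a (y M) Y))"
      by (simp add: algebra_simps)
    have t1: "cnorm ipF ((\<Sum>j<M. a (x j) (a (y j) X)) - (\<Sum>j<M. a (x j) (a (y j) Y))) \<le> K * cnorm ipF (X - Y)"
      using K(2) X Y by blast
    have t2: "cnorm ipF (a (x M) (a (y M) X) - a (x M) (a (y M) Y)) \<le> K1 * cnorm ipF (X - Y)"
      using K1(2) X Y by blast
    show ?thesis unfolding eq
      using cnorm_triangle[OF HF', of "(\<Sum>j<M. a (x j) (a (y j) X)) - (\<Sum>j<M. a (x j) (a (y j) Y))"
          "a (x M) (a (y M) X) - a (x M) (a (y M) Y)"] t1 t2 by (simp add: distrib_right)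
  qed
  then show ?case using K(1) K1(1) by (intro exI[of _ "K + K1"]) auto
qed

end

lemma ip_sums:
  assumes H: "cinner_space sc ip"
  shows "ip (\<Sum>j\<in>K. sc (c j) (u j)) (\<Sum>k\<in>K'. sc (d k) (v k)) = (\<Sum>j\<in>K. \<Sum>k\<in>K'. cnj (c j) * d k * ip (u j) (v k))"
  by (simp add: ip_sum_left[OF H] ip_sum_right[OF H] ip_sc_left[OF H] ip_sc_right[OF H] sum_distrib_left mult.assoc mult.left_commute)
    (rule sum.swap)

lemma amgm_sq: "(x::real) * y * q \<le> (x^2 + y^2) / 2 * q" if "q \<ge> 0"
proof -
  have "0 \<le> (x - y)^2" by simp
  moreover have "(x - y)^2 = x^2 - 2*x*y + y^2" by (simp add: power2_diff)
  ultimately have "2 * x * y \<le> x^2 + y^2" by linarith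
  then have "x * y \<le> (x^2 + y^2) / 2" by (simp add: field_simps)
  then show ?thesis using that by (intro mult_right_mono) auto
qed

context
  fixes scL :: "complex \<Rightarrow> 'l::ab_group_add \<Rightarrow> 'l" and ipL :: "'l \<Rightarrow> 'l \<Rightarrow> complex"
    and J :: "'l \<Rightarrow> 'l" and A :: "'l \<Rightarrow> 'l" and e :: "nat \<Rightarrow> 'l"
    and scF :: "complex \<Rightarrow> 'f::ab_group_add \<Rightarrow> 'f" and ipF :: "'f \<Rightarrow> 'f \<Rightarrow> complex"
    and D :: "'f set" and a ad :: "'l \<Rightarrow> 'f \<Rightarrow> 'f" and \<Omega> :: 'f
  assumes HL: "cinner_space scL ipL"
    and Jc: "conjugation scL ipL J"
    and FR: "fock_rep scL ipL J scF ipF D a ad \<Omega>"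
    and TS: "transpose_selfadj ipL J A"
    and CS: "cons_system ipL e"
begin

lemma on: "ipL (e i) (e j) = (if i = j then 1 else 0)" using CS unfolding cons_system_def by blast

lemma symA: "ipL (J (A x)) y = ipL (J (A y)) x"
proof -
  have adj: "ipL (A u) v = ipL u (J (A (J v)))" for u v
    using TS unfolding transpose_selfadj_def is_adjoint_def op_bar_def by blast
  have "ipL (J (A x)) y = ipL (J (A x)) (J (J y))" by (simp add: JJ[OF HL Jc FR])
  also have "\<dots> = ipL (J y) (A x)" by (rule ipJ[OF HL Jc FR])
  also have "\<dots> = cnj (ipL (A x) (J y))" by (rule ip_sym[OF HL])
  also have "ipL (A x) (J y) = ipL x (J (A y))" using adj[of x "J y"] by (simp add: JJ[OF HL Jc FR])
  also have "cnj (ipL x (J (A y))) = ipL (J (A y)) x" using ip_sym[OF HL, of x "J (A y)"] by simp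
  finally show ?thesis .
qed

definition "ss j = Re (ipL (A (e j)) (A (e j)))"
definition "yy j = J (A (e j))"
definition "ww k = ad (e k) (ad (yy k) \<Omega>)"

lemma ss_nonneg: "ss j \<ge> 0" unfolding ss_def by (rule ip_pos[OF HL])

lemma yy_yy: "ipL (yy j) (yy j) = complex_of_real (ss j)"
  unfolding yy_def ss_def using ipJ[OF HL Jc FR] ip_self_real[OF HL] by metis

lemma ww_D: "ww k \<in> D" unfolding ww_def by (intro ad_D[OF HL Jc FR] Om_D[OF HL Jc FR])

lemma z_conj: "ipL (e j) (yy k) = cnj (ipL (yy j) (e k))"
proof -
  have "ipL (e j) (yy k) = cnj (ipL (yy k) (e j))" by (rule ip_sym[OF HL])
  also have "ipL (yy k) (e j) = ipL (yy j) (e k)" unfolding yy_def by (rule symA)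
  finally show ?thesis .
qed

definition "zz j k = cmod (ipL (yy j) (e k))"

lemma gram_ww: "ipF (ww j) (ww k) = complex_of_real ((zz j k)^2 + (if j = k then ss k else 0))"
proof -
  have "ipF (ww j) (ww k) = ipL (e j) (yy k) * ipL (yy j) (e k) + ipL (e j) (e k) * ipL (yy j) (yy k)"
    unfolding ww_def by (rule gram2[OF HL Jc FR])
  also have "ipL (e j) (yy k) * ipL (yy j) (e k) = complex_of_real ((zz j k)^2)"
    unfolding z_conj zz_def by (metis complex_norm_square mult.commute)
  also have "ipL (e j) (e k) * ipL (yy j) (yy k) = complex_of_real (if j = k then ss k else 0)"
    by (simp add: on yy_yy)
  finally show ?thesis by simp
qed

lemma bessel_rows: "finite K \<Longrightarrow> (\<Sum>k\<in>K. (zz j k)^2) \<le> ss j"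
proof -
  assume fin: "finite K"
  have "(\<Sum>k\<in>K. (cmod (ipL (e k) (yy j)))^2) \<le> Re (ipL (yy j) (yy j))"
    by (rule bessel[OF HL _ fin]) (rule on)
  moreover have "cmod (ipL (e k) (yy j)) = zz j k" for k
    unfolding zz_def using ip_sym[OF HL, of "yy j" "e k"] by simp
  ultimately show ?thesis using yy_yy by simp
qed

lemma bessel_cols: "finite K \<Longrightarrow> (\<Sum>j\<in>K. (zz j k)^2) \<le> ss k"
proof -
  assume fin: "finite K"
  have "(\<Sum>j\<in>K. (cmod (ipL (e j) (yy k)))^2) \<le> Re (ipL (yy k) (yy k))"
    by (rule bessel[OF HL _ fin]) (rule on)
  moreover have "cmod (ipL (e j) (yy k)) = zz j k" for j
    unfolding zz_def z_conj by simp
  ultimately show ?thesis using yy_yy by simp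
qed

lemma norm_bound:
  fixes c :: "nat \<Rightarrow> real"
  assumes fin: "finite K"
  shows "(cnorm ipF (\<Sum>k\<in>K. scF (complex_of_real (c k)) (ww k)))^2 \<le> 2 * (\<Sum>k\<in>K. (c k)^2 * ss k)"
proof -
  let ?X = "\<Sum>k\<in>K. scF (complex_of_real (c k)) (ww k)"
  have "ipF ?X ?X = (\<Sum>j\<in>K. \<Sum>k\<in>K. complex_of_real (c j * c k * ((zz j k)^2 + (if j = k then ss k else 0))))"
    by (simp add: ip_sums[OF HF[OF HL Jc FR]] gram_ww)
  then have "Re (ipF ?X ?X) = (\<Sum>j\<in>K. \<Sum>k\<in>K. c j * c k * (zz j k)^2) + (\<Sum>j\<in>K. \<Sum>k\<in>K. c j * c k * (if j = k then ss k else 0))"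
    by (simp add: Re_sum distrib_left sum.distrib)
  also have "(\<Sum>j\<in>K. \<Sum>k\<in>K. c j * c k * (if j = k then ss k else 0)) = (\<Sum>k\<in>K. (c k)^2 * ss k)"
  proof -
    have "\<And>j. j \<in> K \<Longrightarrow> (\<Sum>k\<in>K. c j * c k * (if j = k then ss k else 0)) = (c j)^2 * ss j"
      using fin by (simp add: if_distrib[of "\<lambda>t. _ * t"] power2_eq_square cong: if_cong)
    then show ?thesis by simp
  qed
  also have "(\<Sum>j\<in>K. \<Sum>k\<in>K. c j * c k * (zz j k)^2) \<le> (\<Sum>k\<in>K. (c k)^2 * ss k)"
  proof -
    have "(\<Sum>j\<in>K. \<Sum>k\<in>K. c j * c k * (zz j k)^2) \<le> (\<Sum>j\<in>K. \<Sum>k\<in>K. ((c j)^2 + (c k)^2) / 2 * (zz j k)^2)"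
      by (intro sum_mono amgm_sq) simp
    also have "\<dots> = (\<Sum>j\<in>K. \<Sum>k\<in>K. (c j)^2 * (zz j k)^2 / 2 + (c k)^2 * (zz j k)^2 / 2)"
      by (intro sum.cong refl) (simp add: field_simps)
    also have "\<dots> = (\<Sum>j\<in>K. \<Sum>k\<in>K. (c j)^2 * (zz j k)^2) / 2 + (\<Sum>j\<in>K. \<Sum>k\<in>K. (c k)^2 * (zz j k)^2) / 2"
      by (simp only: sum.distrib sum_divide_distrib)
    also have "(\<Sum>j\<in>K. \<Sum>k\<in>K. (c k)^2 * (zz j k)^2) = (\<Sum>k\<in>K. \<Sum>j\<in>K. (c k)^2 * (zz j k)^2)"
      by (rule sum.swap)
    also have "\<dots> = (\<Sum>k\<in>K. (c k)^2 * (\<Sum>j\<in>K. (zz j k)^2))"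
      by (simp only: sum_distrib_left)
    also have "(\<Sum>j\<in>K. \<Sum>k\<in>K. (c j)^2 * (zz j k)^2) = (\<Sum>j\<in>K. (c j)^2 * (\<Sum>k\<in>K. (zz j k)^2))"
      by (simp only: sum_distrib_left)
    also have "(\<Sum>j\<in>K. (c j)^2 * (\<Sum>k\<in>K. (zz j k)^2)) / 2 + (\<Sum>k\<in>K. (c k)^2 * (\<Sum>j\<in>K. (zz j k)^2)) / 2
       = ((\<Sum>j\<in>K. (c j)^2 * (\<Sum>k\<in>K. (zz j k)^2)) + (\<Sum>k\<in>K. (c k)^2 * (\<Sum>j\<in>K. (zz j k)^2))) / 2"
      by simp
    also have "\<dots> \<le> ((\<Sum>j\<in>K. (c j)^2 * ss j) + (\<Sum>k\<in>K. (c k)^2 * ss k)) / 2"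
      using bessel_rows[OF fin] bessel_cols[OF fin]
      by (intro divide_right_mono add_mono sum_mono mult_left_mono) auto
    finally show ?thesis by simp
  qed
  finally show ?thesis using cnorm_sq[OF HF[OF HL Jc FR]] by simp
qed


lemma Psi_D: "(\<Sum>k<N. scF (complex_of_real (c k)) (ww k)) \<in> D"
  by (intro D_sum[OF HL Jc FR] D_sc[OF HL Jc FR] ww_D)

lemma omega_Delta:
  fixes c :: "nat \<Rightarrow> real"
  assumes c: "\<And>k. c k \<ge> 0" and MN: "M \<le> N"
  shows "(\<Sum>k<M. c k * ss k) \<le> Re (ipF \<Omega> (Delta a J A e M (\<Sum>k<N. scF (complex_of_real (c k)) (ww k))))"
proof -
  note HF' = HF[OF HL Jc FR]
  define Psi where "Psi = (\<Sum>k<N. scF (complex_of_real (c k)) (ww k))"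
  have PD: "Psi \<in> D" unfolding Psi_def by (rule Psi_D)
  have "ipF \<Omega> (Delta a J A e M Psi) = (\<Sum>j<M. ipF \<Omega> (a (A (e j)) (a (J (e j)) Psi)))"
    unfolding Delta_def by (rule ip_sum_right[OF HF'])
  also have "\<dots> = (\<Sum>j<M. ipF (ww j) Psi)"
    by (intro sum.cong refl) (simp add: Om_aa[OF HL Jc FR PD] JJ[OF HL Jc FR] ww_def yy_def)
  also have "\<dots> = (\<Sum>j<M. \<Sum>k<N. complex_of_real (c k * ((zz j k)^2 + (if j = k then ss k else 0))))"
    unfolding Psi_def by (simp add: ip_sum_right[OF HF'] ip_sc_right[OF HF'] gram_ww)
  finally have "Re (ipF \<Omega> (Delta a J A e M Psi)) = (\<Sum>j<M. \<Sum>k<N. c k * ((zz j k)^2 + (if j = k then ss k else 0)))"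
    by (simp add: Re_sum)
  also have "\<dots> \<ge> (\<Sum>j<M. \<Sum>k<N. c k * (if j = k then ss k else 0))"
    using c by (intro sum_mono mult_left_mono) auto
  also have "(\<Sum>j<M. \<Sum>k<N. c k * (if j = k then ss k else 0)) = (\<Sum>j<M. c j * ss j)"
  proof (rule sum.cong[OF refl])
    fix j assume "j \<in> {..<M}"
    then have "j \<in> {..<N}" using MN by auto
    then show "(\<Sum>k<N. c k * (if j = k then ss k else 0)) = c j * ss j"
      by (simp add: if_distrib[of "\<lambda>t. c _ * t"] cong: if_cong)
  qed
  finally show ?thesis unfolding Psi_def .
qed

end

theorem proposition5p8:
  fixes scL :: "complex \<Rightarrow> 'l::ab_group_add \<Rightarrow> 'l" and ipL :: "'l \<Rightarrow> 'l \<Rightarrow> complex"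
    and J :: "'l \<Rightarrow> 'l" and A :: "'l \<Rightarrow> 'l" and e :: "nat \<Rightarrow> 'l"
    and scF :: "complex \<Rightarrow> 'f::ab_group_add \<Rightarrow> 'f" and ipF :: "'f \<Rightarrow> 'f \<Rightarrow> complex"
    and D :: "'f set" and a ad :: "'l \<Rightarrow> 'f \<Rightarrow> 'f" and \<Omega> :: 'f
  assumes "chilbert scL ipL"
    and "conjugation scL ipL J"
    and "fock_rep scL ipL J scF ipF D a ad \<Omega>"
    and "bounded_on scL ipL UNIV A"
    and "transpose_selfadj ipL J A"
    and "cons_system ipL e"
    and "\<forall>\<Psi>\<in>nparticle scF ipF ad \<Omega> 2.
           \<exists>\<Phi>. (\<lambda>M. cnorm ipF (Delta a J A e M \<Psi> - \<Phi>)) \<longlonglongrightarrow> 0"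
  shows "hilbert_schmidt scL ipL A"
proof -
  have HL: "cinner_space scL ipL" using assms(1) unfolding chilbert_def by blast
  note Jc = assms(2) and FR = assms(3) and TS = assms(5) and CS = assms(6)
  note HF = HF[OF HL Jc FR]
  have CH: "chilbert scF ipF" using FR unfolding fock_rep_def by blast
  define s where "s = ss ipL A e"
  have s_nn: "\<And>j. s j \<ge> 0" unfolding s_def by (rule ss_nonneg[OF HL Jc FR TS CS])
  have summ: "summable s"
  proof (rule ccontr)
    assume ns: "\<not> summable s"
    define c where "c = (\<lambda>k. 1 / (1 + (\<Sum>i<Suc k. s i)))"
    have dpos: "1 + (\<Sum>i<Suc k. s i) > 0" for k
      using s_nn by (smt (verit) sum_nonneg)
    have c_nn: "c k \<ge> 0" for k unfolding c_def using dpos[of k] by simp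
    have cs: "c k * s k = s k / (1 + (\<Sum>i<Suc k. s i))" for k unfolding c_def by simp
    have t_summ: "summable (\<lambda>k. (c k)^2 * s k)"
    proof -
      have "(c k)^2 * s k = s k / (1 + (\<Sum>i<Suc k. s i))^2" for k
        unfolding c_def by (simp add: power_divide)
      then show ?thesis using R2[OF s_nn] by simp
    qed
    define w where "w = ww J A e ad \<Omega>"
    define Ps where "Ps = (\<lambda>N. \<Sum>k<N. scF (complex_of_real (c k)) (w k))"
    have w_cv: "w k \<in> creation_vectors ad \<Omega> 2" for k
      unfolding w_def ww_def[OF HL Jc FR TS CS] by (rule cv2_mem[OF HL Jc FR])
    have Ps_span: "Ps N \<in> cspan scF (creation_vectors ad \<Omega> 2)" for N
      unfolding Ps_def cspan_def using w_cv
      by (intro CollectI exI[of _ N] exI[of _ "\<lambda>k. complex_of_real (c k)"] exI[of _ w]) simp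
    have Ps_NP: "Ps N \<in> nparticle scF ipF ad \<Omega> 2" for N
      unfolding nparticle_def by (rule cspan_in_closure[OF HF Ps_span])
    have Ps_diff: "(cnorm ipF (Ps n - Ps m))^2 \<le> 2 * (\<Sum>k\<in>{m..<n}. (c k)^2 * s k)" if mn: "m \<le> n" for m n
    proof -
      have "Ps n = Ps m + (\<Sum>k\<in>{m..<n}. scF (complex_of_real (c k)) (w k))"
        unfolding Ps_def using mn by (simp add: lessThan_atLeast0 sum.atLeastLessThan_concat)
      then have "Ps n - Ps m = (\<Sum>k\<in>{m..<n}. scF (complex_of_real (c k)) (w k))" by simp
      then show ?thesis unfolding w_def s_def using norm_bound[OF HL Jc FR TS CS, of "{m..<n}" c] by simp
    qed
    have cauchy: "\<forall>\<epsilon>>0. \<exists>N. \<forall>m\<ge>N. \<forall>n\<ge>N. cnorm ipF (Ps m - Ps n) < \<epsilon>"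
    proof (intro allI impI)
      fix \<epsilon> :: real assume ep: "\<epsilon> > 0"
      then have "\<epsilon>^2 / 2 > 0" by simp
      then obtain N where N: "\<forall>m\<ge>N. \<forall>n. norm (\<Sum>k\<in>{m..<n}. (c k)^2 * s k) < \<epsilon>^2 / 2"
        using t_summ unfolding summable_Cauchy by blast
      have le: "cnorm ipF (Ps n - Ps m) < \<epsilon>" if "N \<le> m" "m \<le> n" for m n
      proof -
        have "(cnorm ipF (Ps n - Ps m))^2 \<le> 2 * (\<Sum>k\<in>{m..<n}. (c k)^2 * s k)" using Ps_diff that(2) .
        also have "\<dots> < \<epsilon>^2"
        proof -
          have "norm (\<Sum>k\<in>{m..<n}. (c k)^2 * s k) < \<epsilon>^2 / 2" using N that(1) by blast
          then have "(\<Sum>k\<in>{m..<n}. (c k)^2 * s k) < \<epsilon>^2 / 2" by simp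
          then show ?thesis by simp
        qed
        finally show ?thesis using ep by (simp add: power_less_imp_less_base)
      qed
      show "\<exists>N. \<forall>m\<ge>N. \<forall>n\<ge>N. cnorm ipF (Ps m - Ps n) < \<epsilon>"
      proof (intro exI[of _ N] allI impI)
        fix m n assume "N \<le> m" "N \<le> n"
        then show "cnorm ipF (Ps m - Ps n) < \<epsilon>"
          using le[of m n] le[of n m] cnorm_commute[OF HF, of "Ps m" "Ps n"] by (cases "m \<le> n") auto
      qed
    qed
    obtain Psi where Psi: "(\<lambda>n. cnorm ipF (Ps n - Psi)) \<longlonglongrightarrow> 0"
      using CH cauchy unfolding chilbert_def by blast
    have ev: "\<exists>n0. \<forall>n\<ge>n0. cnorm ipF (Ps n - Psi) < r" if "r > 0" for r
      using LIMSEQ_D[OF Psi that] cnorm_nonneg[OF HF] by simp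
    have Psi_NP: "Psi \<in> nparticle scF ipF ad \<Omega> 2"
      unfolding nparticle_def cclosure_def
    proof (intro CollectI allI impI)
      fix \<epsilon> :: real assume "\<epsilon> > 0"
      then obtain n0 where "\<forall>n\<ge>n0. cnorm ipF (Ps n - Psi) < \<epsilon>" using ev by blast
      then have "cnorm ipF (Psi - Ps n0) < \<epsilon>" using cnorm_commute[OF HF] by auto
      then show "\<exists>y\<in>cspan scF (creation_vectors ad \<Omega> 2). cnorm ipF (Psi - y) < \<epsilon>"
        using Ps_span by blast
    qed
    obtain Phi where Phi: "(\<lambda>M. cnorm ipF (Delta a J A e M Psi - Phi)) \<longlonglongrightarrow> 0"
      using assms(7) Psi_NP by blast
    obtain M1 where M1: "\<forall>M\<ge>M1. cnorm ipF (Delta a J A e M Psi - Phi) < 1"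
      using LIMSEQ_D[OF Phi, of 1] cnorm_nonneg[OF HF] by auto
    obtain M0 where M0: "cnorm ipF Phi + 2 < (\<Sum>k<M0. s k / (1 + (\<Sum>i<Suc k. s i)))"
      using R1[OF s_nn ns] by blast
    define M where "M = max M0 M1"
    have sumM: "cnorm ipF Phi + 2 < (\<Sum>k<M. c k * s k)"
    proof -
      have "(\<Sum>k<M0. c k * s k) \<le> (\<Sum>k<M. c k * s k)"
        unfolding M_def using c_nn s_nn by (intro sum_mono2) (auto intro: mult_nonneg_nonneg)
      then show ?thesis using M0 cs by simp
    qed
    obtain K where K: "K \<ge> 0" "\<forall>X\<in>nparticle scF ipF ad \<Omega> 2. \<forall>Y\<in>nparticle scF ipF ad \<Omega> 2.
       cnorm ipF ((\<Sum>j<M. a (A (e j)) (a (J (e j)) X)) - (\<Sum>j<M. a (A (e j)) (a (J (e j)) Y))) \<le> K * cnorm ipF (X - Y)"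
      using Delta_cont[OF HL Jc FR, of "\<lambda>j. A (e j)" "\<lambda>j. J (e j)" M] by blast
    have "1 / (K + 1) > 0" using K(1) by simp
    then obtain N0 where N0: "\<forall>n\<ge>N0. cnorm ipF (Ps n - Psi) < 1 / (K + 1)" using ev by blast
    define N where "N = max M N0"
    have low: "(\<Sum>k<M. c k * s k) \<le> Re (ipF \<Omega> (Delta a J A e M (Ps N)))"
      unfolding Ps_def w_def s_def
      by (rule omega_Delta[OF HL Jc FR TS CS c_nn]) (simp add: N_def)
    have dif: "cnorm ipF (Delta a J A e M (Ps N) - Delta a J A e M Psi) \<le> 1"
    proof -
      have "cnorm ipF (Delta a J A e M (Ps N) - Delta a J A e M Psi) \<le> K * cnorm ipF (Ps N - Psi)"
        unfolding Delta_def using K(2) Ps_NP Psi_NP by blast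
      also have "\<dots> \<le> K * (1 / (K + 1))"
        using N0 K(1) unfolding N_def by (intro mult_left_mono) (auto intro: less_imp_le)
      also have "\<dots> \<le> 1" using K(1) by (simp add: field_simps)
      finally show ?thesis .
    qed
    have Om1: "cnorm ipF \<Omega> = 1" unfolding cnorm_def using Om_norm[OF HL Jc FR] by simp
    have "Re (ipF \<Omega> (Delta a J A e M (Ps N))) - Re (ipF \<Omega> (Delta a J A e M Psi))
        = Re (ipF \<Omega> (Delta a J A e M (Ps N) - Delta a J A e M Psi))"
      by (simp add: ip_diff_right[OF HF])
    also have "\<dots> \<le> cnorm ipF (Delta a J A e M (Ps N) - Delta a J A e M Psi)"
      using Re_ip_le[OF HF, of \<Omega>] Om1 by (metis mult_1)
    finally have step1: "Re (ipF \<Omega> (Delta a J A e M (Ps N))) \<le> Re (ipF \<Omega> (Delta a J A e M Psi)) + 1"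
      using dif by linarith
    have "Re (ipF \<Omega> (Delta a J A e M Psi)) \<le> cnorm ipF (Delta a J A e M Psi)"
      using Re_ip_le[OF HF, of \<Omega>] Om1 by (metis mult_1)
    also have "\<dots> \<le> cnorm ipF (Delta a J A e M Psi - Phi) + cnorm ipF Phi"
      using cnorm_triangle[OF HF, of "Delta a J A e M Psi - Phi" Phi] by simp
    also have "\<dots> < 1 + cnorm ipF Phi" using M1 unfolding M_def by auto
    finally show False using low step1 sumM by linarith
  qed
  have "summable (\<lambda>j. (cnorm ipL (A (e j)))^2)"
    using summ unfolding s_def ss_def[OF HL Jc FR TS CS] cnorm_sq[OF HL] .
  then show ?thesis unfolding hilbert_schmidt_def using assms(4) CS by blast
qed

end
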